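(* Let $n\geq 1$ be an integer and let $a,b,x\in\mathbb{C}$. Then $$\sum_{k=0}^{n-1}\frac{1}{n}\binom{n}{k}\binom{n}{k+1}x^{2k}b^{n-1-k}=\sum_{k=0}^{n-1}\binom{n-1}{k}M_k^{(a,b)}x^k(x^2-ax+b)^{n-1-k},$$ where $M_k^{(a,b)}$ denotes the $(a,b)$-Motzkin number defined in the context.
   Context: Let $C_k=\frac{1}{k+1}\binom{2k}{k}$ be the Catalan numbers. For an integer $m\geq 0$ and $a,b\in\mathbb{C}$, the $(a,b)$-Motzkin number is $$M_m^{(a,b)}=\sum_{k=0}^{\lfloor m/2\rfloor}\binom{m}{2k}C_k a^{m-2k}b^k .$$ (Equivalently, it is the total weight of Motzkin paths from $(0,0)$ to $(m,m)$ with steps $(0,2),(2,0),(1,1)$ never going below $y=x$, where each $(1,1)$ step has weight $a$, each $(2,0)$ step has weight $b$, and a path's weight is the product of its step weights.) In particular $M_0^{(a,b)}=1$. *)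

theory Defs
  imports Complex_Main
begin

definition catalan :: "nat \<Rightarrow> complex" where
  "catalan k = of_nat ((2*k) choose k) / of_nat (k+1)"

definition motzkin :: "complex \<Rightarrow> complex \<Rightarrow> nat \<Rightarrow> complex" where
  "motzkin a b m = (\<Sum>k=0..m div 2. of_nat (m choose (2*k)) * catalan k * a^(m - 2*k) * b^k)"

end

theory Submission imports Defs begin

lemma reidx1:
  fixes g :: "nat \<Rightarrow> nat \<Rightarrow> complex"
  shows "(\<Sum>j=0..N div 2. \<Sum>i=0..N-2*j. g j i)
       = (\<Sum>k=0..N. \<Sum>j=0..N div 2. if j \<le> k \<and> k - j \<le> N - 2*j then g j (k-j) else 0)"
proof -
  have "(\<Sum>k=0..N. \<Sum>j=0..N div 2. if j \<le> k \<and> k - j \<le> N - 2*j then g j (k-j) else 0)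
      = (\<Sum>j=0..N div 2. \<Sum>k=0..N. if j \<le> k \<and> k - j \<le> N - 2*j then g j (k-j) else 0)"
    by (rule sum.swap)
  also have "\<dots> = (\<Sum>j=0..N div 2. \<Sum>i=0..N-2*j. g j i)"
  proof (rule sum.cong[OF refl])
    fix j assume j: "j \<in> {0..N div 2}"
    have "(\<Sum>k=0..N. if j \<le> k \<and> k - j \<le> N - 2*j then g j (k-j) else 0)
        = (\<Sum>k=0..N. if k \<in> {0+j..(N-2*j)+j} then g j (k-j) else 0)"
      by (rule sum.cong) auto
    also have "\<dots> = (\<Sum>k\<in>{0..N} \<inter> {0+j..(N-2*j)+j}. g j (k-j))"
      by (rule sum.inter_restrict[symmetric]) simp
    also have "{0..N} \<inter> {0+j..(N-2*j)+j} = {0+j..(N-2*j)+j}" using j by auto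
    also have "(\<Sum>k\<in>{0+j..(N-2*j)+j}. g j (k-j)) = (\<Sum>i=0..N-2*j. g j i)"
      by (subst sum.shift_bounds_cl_nat_ivl) simp
    finally show "(\<Sum>k=0..N. if j \<le> k \<and> k - j \<le> N - 2*j then g j (k-j) else 0) = (\<Sum>i=0..N-2*j. g j i)" .
  qed
  finally show ?thesis by simp
qed

lemma reidx2:
  fixes g :: "nat \<Rightarrow> nat \<Rightarrow> complex"
  shows "(\<Sum>k=0..N. \<Sum>j=0..k div 2. g k j) = (\<Sum>j=0..N div 2. \<Sum>i=0..N-2*j. g (i+2*j) j)"
proof -
  have "(\<Sum>k=0..N. \<Sum>j=0..k div 2. g k j) = (\<Sum>k=0..N. \<Sum>j=0..N div 2. if j \<in> {0..k div 2} then g k j else 0)"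
  proof (rule sum.cong[OF refl])
    fix k assume k: "k \<in> {0..N}"
    have "{0..N div 2} \<inter> {0..k div 2} = {0..k div 2}" using k by (auto intro: div_le_mono order_trans)
    then show "(\<Sum>j=0..k div 2. g k j) = (\<Sum>j=0..N div 2. if j \<in> {0..k div 2} then g k j else 0)"
      using sum.inter_restrict[of "{0..N div 2}" "g k" "{0..k div 2}"] by simp
  qed
  also have "\<dots> = (\<Sum>j=0..N div 2. \<Sum>k=0..N. if j \<in> {0..k div 2} then g k j else 0)"
    by (rule sum.swap)
  also have "\<dots> = (\<Sum>j=0..N div 2. \<Sum>i=0..N-2*j. g (i+2*j) j)"
  proof (rule sum.cong[OF refl])
    fix j assume j: "j \<in> {0..N div 2}"
    have "(\<Sum>k=0..N. if j \<in> {0..k div 2} then g k j else 0) = (\<Sum>k=0..N. if k \<in> {0+2*j..(N-2*j)+2*j} then g k j else 0)"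
      by (rule sum.cong) auto
    also have "\<dots> = (\<Sum>k\<in>{0..N} \<inter> {0+2*j..(N-2*j)+2*j}. g k j)"
      by (rule sum.inter_restrict[symmetric]) simp
    also have "{0..N} \<inter> {0+2*j..(N-2*j)+2*j} = {0+2*j..(N-2*j)+2*j}" using j by auto
    also have "(\<Sum>k\<in>{0+2*j..(N-2*j)+2*j}. g k j) = (\<Sum>i=0..N-2*j. g (i+2*j) j)"
      by (subst sum.shift_bounds_cl_nat_ivl) simp
    finally show "(\<Sum>k=0..N. if j \<in> {0..k div 2} then g k j else 0) = (\<Sum>i=0..N-2*j. g (i+2*j) j)" .
  qed
  finally show ?thesis .
qed

lemma motz_scale: "motzkin a b k * x^k = motzkin (a*x) (b*x^2) k"
  unfolding motzkin_def sum_distrib_right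
proof (rule sum.cong[OF refl])
  fix j assume j: "j \<in> {0..k div 2}"
  then have "k = (k - 2*j) + 2*j" by auto
  then have "x^k = x^(k-2*j) * (x^2)^j" by (metis power_add power_mult)
  then show "of_nat (k choose (2*j)) * catalan j * a^(k-2*j) * b^j * x^k
      = of_nat (k choose (2*j)) * catalan j * (a*x)^(k-2*j) * (b*x^2)^j"
    by (simp add: power_mult_distrib)
qed

lemma binom_transform:
  "(\<Sum>k=0..N. of_nat (N choose k) * motzkin a b k * c^(N-k)) = motzkin (a+c) b N"
proof -
  have "(\<Sum>k=0..N. of_nat (N choose k) * motzkin a b k * c^(N-k))
      = (\<Sum>k=0..N. \<Sum>j=0..k div 2. of_nat (N choose k) * (of_nat (k choose (2*j)) * catalan j * a^(k-2*j) * b^j) * c^(N-k))"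
    unfolding motzkin_def by (simp add: sum_distrib_left sum_distrib_right)
  also have "\<dots> = (\<Sum>j=0..N div 2. \<Sum>i=0..N-2*j. of_nat (N choose (i+2*j)) * (of_nat ((i+2*j) choose (2*j)) * catalan j * a^(i+2*j-2*j) * b^j) * c^(N-(i+2*j)))"
    by (rule reidx2)
  also have "\<dots> = (\<Sum>j=0..N div 2. of_nat (N choose (2*j)) * catalan j * (\<Sum>i=0..N-2*j. of_nat ((N-2*j) choose i) * a^i * c^(N-2*j-i)) * b^j)"
  proof (rule sum.cong[OF refl])
    fix j assume j: "j \<in> {0..N div 2}"
    show "(\<Sum>i=0..N-2*j. of_nat (N choose (i+2*j)) * (of_nat ((i+2*j) choose (2*j)) * catalan j * a^(i+2*j-2*j) * b^j) * c^(N-(i+2*j)))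
      = of_nat (N choose (2*j)) * catalan j * (\<Sum>i=0..N-2*j. of_nat ((N-2*j) choose i) * a^i * c^(N-2*j-i)) * b^j"
      unfolding sum_distrib_left sum_distrib_right
    proof (rule sum.cong[OF refl])
      fix i assume i: "i \<in> {0..N-2*j}"
      have "(N choose (i+2*j)) * ((i+2*j) choose (2*j)) = (N choose (2*j)) * ((N-2*j) choose i)"
        using choose_mult[of "2*j" "i+2*j" N] i j by auto
      then have e: "(of_nat (N choose (i+2*j)) :: complex) * of_nat ((i+2*j) choose (2*j)) = of_nat (N choose (2*j)) * of_nat ((N-2*j) choose i)"
        by (metis of_nat_mult)
      have "N-(i+2*j) = N-2*j-i" by simp
      then show "of_nat (N choose (i+2*j)) * (of_nat ((i+2*j) choose (2*j)) * catalan j * a^(i+2*j-2*j) * b^j) * c^(N-(i+2*j))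
        = of_nat (N choose (2*j)) * catalan j * (of_nat ((N-2*j) choose i) * a^i * c^(N-2*j-i)) * b^j"
        using e by (simp add: algebra_simps)
    qed
  qed
  also have "\<dots> = motzkin (a+c) b N"
    unfolding motzkin_def binomial_ring atLeast0AtMost by (simp add: algebra_simps)
  finally show ?thesis .
qed

lemma nat_term:
  assumes "j \<le> k" "k + j \<le> N"
  shows "(N choose (2*j)) * ((N-2*j) choose (k-j)) * ((2*j) choose j) = (N choose k) * ((N-k) choose j) * (k choose j)"
proof -
  have 1: "(N choose (k+j)) * ((k+j) choose (2*j)) = (N choose (2*j)) * ((N-2*j) choose (k+j-2*j))"
    using choose_mult[of "2*j" "k+j" N] assms by auto
  have 2: "((k+j) choose (2*j)) * ((2*j) choose j) = ((k+j) choose j) * ((k+j-j) choose (2*j-j))"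
    using choose_mult[of j "2*j" "k+j"] assms by auto
  have 3: "(N choose (k+j)) * ((k+j) choose k) = (N choose k) * ((N-k) choose (k+j-k))"
    using choose_mult[of k "k+j" N] assms by auto
  have 4: "(k+j) choose j = (k+j) choose k"
    using binomial_symmetric[of j "k+j"] by simp
  have "(N choose (2*j)) * ((N-2*j) choose (k-j)) * ((2*j) choose j)
      = (N choose (k+j)) * ((k+j) choose (2*j)) * ((2*j) choose j)"
    using 1 assms by (simp add: mult_2)
  also have "\<dots> = (N choose (k+j)) * ((k+j) choose k) * (k choose j)"
    using 2 4 by (simp add: mult.assoc mult_2)
  also have "\<dots> = (N choose k) * ((N-k) choose j) * (k choose j)"
    using 3 by simp
  finally show ?thesis .
qed

lemma cplx_term:
  assumes "j \<le> k" "k + j \<le> N"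
  shows "of_nat (N choose (2*j)) * catalan j * of_nat ((N-2*j) choose (k-j))
     = of_nat (N choose k) / of_nat (N-k+1) * of_nat ((k choose j) * ((N-k+1) choose (j+1)))"
proof -
  have a: "(of_nat (N choose (2*j)) :: complex) * of_nat ((N-2*j) choose (k-j)) * of_nat ((2*j) choose j)
       = of_nat (N choose k) * of_nat ((N-k) choose j) * of_nat (k choose j)"
    using nat_term[OF assms] by (metis of_nat_mult)
  have b: "(of_nat (Suc (N-k)) :: complex) * of_nat ((N-k) choose j) = of_nat (Suc (N-k) choose Suc j) * of_nat (Suc j)"
    using Suc_times_binomial_eq[of "N-k" j] by (metis of_nat_mult)
  have nk: "N - k + 1 = Suc (N-k)" by simp
  define P where "P = (of_nat (Suc (N-k) choose Suc j) :: complex)"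
  have c: "P = of_nat (Suc (N-k)) * of_nat ((N-k) choose j) / of_nat (Suc j)"
    using b unfolding P_def by (simp add: field_simps del: of_nat_Suc)
  have "of_nat (N choose (2*j)) * catalan j * of_nat ((N-2*j) choose (k-j))
     = (of_nat (N choose (2*j)) * of_nat ((N-2*j) choose (k-j)) * of_nat ((2*j) choose j)) / of_nat (Suc j)"
    unfolding catalan_def by simp
  also have "\<dots> = of_nat (N choose k) * of_nat ((N-k) choose j) * of_nat (k choose j) / of_nat (Suc j)"
    using a by simp
  also have "\<dots> = of_nat (N choose k) / of_nat (Suc (N-k)) * (of_nat (k choose j) * P)"
    unfolding c by (simp del: of_nat_Suc)
  finally show ?thesis unfolding nk P_def by simp
qed

lemma nat_sum:
  assumes "k \<le> N"
  shows "(\<Sum>j=0..N div 2. (k choose j) * ((N-k+1) choose (j+1))) = Suc N choose (k+1)"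
proof -
  let ?f = "\<lambda>j. (k choose j) * ((N-k+1) choose (j+1))"
  have z: "?f j = 0" if "\<not> (j \<le> k \<and> j \<le> N - k)" for j
    using that by auto
  have "(\<Sum>j=0..N div 2. ?f j) = (\<Sum>j=0..N. ?f j)"
    by (rule sum.mono_neutral_left) (auto intro!: z)
  also have "\<dots> = (\<Sum>j\<le>N-k. ?f j)"
    by (rule sum.mono_neutral_right) (auto intro!: z)
  also have "\<dots> = (\<Sum>j\<le>N-k. (k choose j) * ((N-k+1) choose ((N-k) - j)))"
  proof (rule sum.cong[OF refl])
    fix j assume "j \<in> {..N-k}"
    then have "j + 1 \<le> N-k+1" by auto
    then have "(N-k+1) choose (j+1) = (N-k+1) choose (N-k+1-(j+1))" by (rule binomial_symmetric)
    then show "?f j = (k choose j) * ((N-k+1) choose ((N-k) - j))" by simp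
  qed
  also have "\<dots> = (k + (N-k+1)) choose (N-k)" by (rule vandermonde)
  also have "\<dots> = Suc N choose (N-k)" using assms by simp
  also have "\<dots> = Suc N choose (Suc N - (N-k))"
    by (rule binomial_symmetric) simp
  also have "\<dots> = Suc N choose (k+1)" using assms by (simp add: Suc_diff_le)
  finally show ?thesis .
qed

lemma coef:
  assumes "k \<le> N"
  shows "(\<Sum>j=0..N div 2. if j \<le> k \<and> k - j \<le> N - 2*j then of_nat (N choose (2*j)) * catalan j * of_nat ((N-2*j) choose (k-j)) else 0)
       = 1 / of_nat (Suc N) * of_nat (Suc N choose k) * of_nat (Suc N choose (k+1))"
proof -
  have "(\<Sum>j=0..N div 2. if j \<le> k \<and> k - j \<le> N - 2*j then of_nat (N choose (2*j)) * catalan j * of_nat ((N-2*j) choose (k-j)) else 0)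
      = (\<Sum>j=0..N div 2. of_nat (N choose k) / of_nat (N-k+1) * of_nat ((k choose j) * ((N-k+1) choose (j+1))))"
  proof (rule sum.cong[OF refl])
    fix j assume j: "j \<in> {0..N div 2}"
    show "(if j \<le> k \<and> k - j \<le> N - 2*j then of_nat (N choose (2*j)) * catalan j * of_nat ((N-2*j) choose (k-j)) else 0)
      = of_nat (N choose k) / of_nat (N-k+1) * (of_nat ((k choose j) * ((N-k+1) choose (j+1))) :: complex)"
    proof (cases "j \<le> k \<and> k - j \<le> N - 2*j")
      case True
      then have "k + j \<le> N" using j by auto
      then show ?thesis using True cplx_term[of j k N] by simp
    next
      case False
      have "2*j \<le> N" using j by auto
      then have "k < j \<or> N - k < j" using False assms by presburger
      then have z: "(k choose j) * ((N-k+1) choose (j+1)) = 0" by auto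
      show ?thesis by (simp only: if_not_P[OF False] z of_nat_0 mult_zero_right)
    qed
  qed
  also have "\<dots> = of_nat (N choose k) / of_nat (N-k+1) * of_nat (\<Sum>j=0..N div 2. (k choose j) * ((N-k+1) choose (j+1)))"
    by (simp add: sum_distrib_left)
  also have "\<dots> = of_nat (N choose k) / of_nat (N-k+1) * of_nat (Suc N choose (k+1))"
    using nat_sum[OF assms] by simp
  also have "\<dots> = 1 / of_nat (Suc N) * of_nat (Suc N choose k) * of_nat (Suc N choose (k+1))"
  proof -
    have "(Suc N - k) * (Suc N choose k) = Suc N * (N choose k)"
      using binomial_absorb_comp[of "Suc N" k] by simp
    then have e: "(of_nat (Suc N - k) :: complex) * of_nat (Suc N choose k) = of_nat (Suc N) * of_nat (N choose k)"
      by (metis of_nat_mult)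
    have "Suc N - k = N - k + 1" using assms by simp
    then have e2: "(of_nat (N - k + 1) :: complex) * of_nat (Suc N choose k) = of_nat (Suc N) * of_nat (N choose k)"
      using e by simp
    have nz: "(of_nat (N - k + 1) :: complex) \<noteq> 0" "(of_nat (Suc N) :: complex) \<noteq> 0" by (simp_all del: of_nat_Suc)
    have "of_nat (N choose k) / of_nat (N-k+1) = (of_nat (Suc N choose k) / of_nat (Suc N) :: complex)"
      using e2 nz by (simp add: divide_simps) (simp add: mult.commute)
    then show ?thesis by simp
  qed
  finally show ?thesis .
qed

lemma nar:
  "motzkin (s+t) (s*t) N = (\<Sum>k=0..N. 1 / of_nat (Suc N) * of_nat (Suc N choose k) * of_nat (Suc N choose (k+1)) * s^k * t^(N-k))"
proof -
  define G where "G = (\<lambda>j i. of_nat (N choose (2*j)) * catalan j * of_nat ((N-2*j) choose i) * s^(j+i) * t^(N-(j+i)))"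
  have "motzkin (s+t) (s*t) N = (\<Sum>j=0..N div 2. \<Sum>i=0..N-2*j. G j i)"
    unfolding motzkin_def
  proof (rule sum.cong[OF refl])
    fix j assume j: "j \<in> {0..N div 2}"
    show "of_nat (N choose (2*j)) * catalan j * (s+t)^(N-2*j) * (s*t)^j = (\<Sum>i=0..N-2*j. G j i)"
      unfolding binomial_ring atLeast0AtMost[symmetric] sum_distrib_left sum_distrib_right
    proof (rule sum.cong[OF refl])
      fix i assume i: "i \<in> {0..N-2*j}"
      have e: "N-(j+i) = (N-2*j-i) + j" using i j by auto
      show "of_nat (N choose (2*j)) * catalan j * (of_nat ((N-2*j) choose i) * s^i * t^(N-2*j-i)) * (s*t)^j = G j i"
        unfolding G_def e by (simp add: power_add power_mult_distrib algebra_simps)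
    qed
  qed
  also have "\<dots> = (\<Sum>k=0..N. \<Sum>j=0..N div 2. if j \<le> k \<and> k - j \<le> N - 2*j then G j (k-j) else 0)"
    by (rule reidx1)
  also have "\<dots> = (\<Sum>k=0..N. (\<Sum>j=0..N div 2. if j \<le> k \<and> k - j \<le> N - 2*j then of_nat (N choose (2*j)) * catalan j * of_nat ((N-2*j) choose (k-j)) else 0) * s^k * t^(N-k))"
  proof (rule sum.cong[OF refl])
    fix k assume k: "k \<in> {0..N}"
    show "(\<Sum>j=0..N div 2. if j \<le> k \<and> k - j \<le> N - 2*j then G j (k-j) else 0)
      = (\<Sum>j=0..N div 2. if j \<le> k \<and> k - j \<le> N - 2*j then of_nat (N choose (2*j)) * catalan j * of_nat ((N-2*j) choose (k-j)) else 0) * s^k * t^(N-k)"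
      unfolding sum_distrib_right
      by (rule sum.cong[OF refl]) (auto simp: G_def)
  qed
  also have "\<dots> = (\<Sum>k=0..N. 1 / of_nat (Suc N) * of_nat (Suc N choose k) * of_nat (Suc N choose (k+1)) * s^k * t^(N-k))"
    by (rule sum.cong[OF refl]) (simp add: coef del: of_nat_Suc)
  finally show ?thesis .
qed

theorem theorem1p1:
  fixes n :: nat and a b x :: complex
  assumes "n \<ge> 1"
  shows "(\<Sum>k=0..n-1. (1 / of_nat n) * of_nat (n choose k) * of_nat (n choose (k+1)) * x^(2*k) * b^(n-1-k))
       = (\<Sum>k=0..n-1. of_nat ((n-1) choose k) * motzkin a b k * x^k * (x^2 - a*x + b)^(n-1-k))"
proof -
  define N where "N = n - 1"
  have nN: "n = Suc N" using assms unfolding N_def by simp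
  have "(\<Sum>k=0..n-1. of_nat ((n-1) choose k) * motzkin a b k * x^k * (x^2 - a*x + b)^(n-1-k))
      = (\<Sum>k=0..N. of_nat (N choose k) * motzkin (a*x) (b*x^2) k * (x^2 - a*x + b)^(N-k))"
    unfolding N_def by (rule sum.cong[OF refl]) (simp add: motz_scale mult.assoc)
  also have "\<dots> = motzkin (a*x + (x^2 - a*x + b)) (b*x^2) N"
    by (rule binom_transform)
  also have "\<dots> = motzkin (x^2 + b) (x^2 * b) N"
    by (simp add: mult.commute)
  also have "\<dots> = (\<Sum>k=0..N. 1 / of_nat (Suc N) * of_nat (Suc N choose k) * of_nat (Suc N choose (k+1)) * (x^2)^k * b^(N-k))"
    by (rule nar)
  also have "\<dots> = (\<Sum>k=0..n-1. (1 / of_nat n) * of_nat (n choose k) * of_nat (n choose (k+1)) * x^(2*k) * b^(n-1-k))"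
    unfolding nN by (simp add: power_mult del: of_nat_Suc)
  finally show ?thesis by simp
qed

end
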